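(* Let $A=k_{-1}[x_1,\dots,x_n]$ (i.e. $p_{ij}=-1$ for all $i\neq j$), and let $G$ be a finite subgroup of $\mathrm{Aut}(A)$ generated by quasi-reflections such that $[n]$ is a circle for $G$ and $\tau_{i,j,1}\in G$ for all $i\ne j$. Define $\Theta_i=\{\lambda\in k^\times:\theta_{i,\lambda}\in G\}$, $T_{i,j}=\{\lambda\in k^\times:\tau_{i,j,\lambda}\in G\}$, $S_{i,j}=\{\lambda\in k^\times: s_{i,j,\lambda}\in G\}$. Then: (a) $\Theta_i=\Theta_j$ for all $i,j$, and $\Theta_i$ is a cyclic group of some order $\alpha$; (b) $S_{i,j}=S_{i',j'}$ for all pairs $i\ne j$, $i'\ne j'$, and $S_{i,j}$ is cyclic of some even order $\beta$; (c) $T_{i,j}=T_{i',j'}=S_{i,j}$ for all such pairs; (d) $\alpha$ divides $\beta$.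
   Context: $k$ is algebraically closed of characteristic zero, $n\ge2$, $[n]=\{1,\dots,n\}$. $A=k_{-1}[x_1,\dots,x_n]$ is the graded $k$-algebra generated by $x_1,\dots,x_n$ (degree 1) with $x_jx_i=-x_ix_j$ for $i\ne j$. $\mathrm{Aut}(A)$: graded algebra automorphisms; $g$ is a quasi-reflection if $\sum_i\mathrm{tr}(g|_{A_i})t^i=\frac1{(1-t)^{n-1}(1-\lambda t)}$ with $\lambda\ne1$. For $s\in[n]$, $\lambda\in k^\times$: $\theta_{s,\lambda}(x_s)=\lambda x_s$, $\theta_{s,\lambda}(x_i)=x_i$ ($i\ne s$). For $s\ne t$, $\lambda\in k^\times$: $\tau_{s,t,\lambda}(x_s)=\lambda x_t$, $\tau_{s,t,\lambda}(x_t)=-\lambda^{-1}x_s$, $\tau_{s,t,\lambda}(x_i)=x_i$ otherwise; $s_{s,t,\lambda}(x_s)=\lambda x_s$, $s_{s,t,\lambda}(x_t)=\lambda^{-1}x_t$, $s_{s,t,\lambda}(x_i)=x_i$ otherwise. $[n]$ is a circle for $G$ if for each pair of distinct $i,j$ there are $\tau_{i_s,j_s,\lambda_s}\in G$, $s=0,\dots,t$, with $i_0=i$, $i_{s+1}=j_s$, $j_t=j$. *)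

theory Defs
  imports "HOL-Computational_Algebra.Polynomial" "HOL-Computational_Algebra.Formal_Power_Series"
begin

text \<open>The skew polynomial ring A = k_{-1}[x_1,...,x_n], realised concretely: an element is a
  coefficient function on exponent vectors a (with a i = 0 for i outside {1..n}) of finite support;
  the monomial x^a means x_1^(a 1) ... x_n^(a n).\<close>

type_synonym 'k skel = "(nat \<Rightarrow> nat) \<Rightarrow> 'k"

definition expvecs :: "nat \<Rightarrow> (nat \<Rightarrow> nat) set" where
  "expvecs n = {a. \<forall>i. i \<notin> {1..n} \<longrightarrow> a i = 0}"

definition mdeg :: "nat \<Rightarrow> (nat \<Rightarrow> nat) \<Rightarrow> nat" where
  "mdeg n a = (\<Sum>i\<in>{1..n}. a i)"

definition Acar :: "nat \<Rightarrow> ('k::field) skel set" where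
  "Acar n = {f. finite {a. f a \<noteq> 0} \<and> (\<forall>a. f a \<noteq> 0 \<longrightarrow> a \<in> expvecs n)}"

text \<open>x^a x^b = (-1)^(sum over i>j of a_i b_j) x^(a+b)\<close>
definition msign :: "nat \<Rightarrow> (nat \<Rightarrow> nat) \<Rightarrow> (nat \<Rightarrow> nat) \<Rightarrow> 'k::field" where
  "msign n a b = (-1) ^ (\<Sum>i\<in>{1..n}. \<Sum>j\<in>{1..n}. if j < i then a i * b j else 0)"

definition amult :: "nat \<Rightarrow> ('k::field) skel \<Rightarrow> 'k skel \<Rightarrow> 'k skel" where
  "amult n f g = (\<lambda>c. if c \<in> expvecs n then
      (\<Sum>a\<in>{a\<in>expvecs n. \<forall>i. a i \<le> c i}. msign n a (\<lambda>i. c i - a i) * f a * g (\<lambda>i. c i - a i))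
     else 0)"

definition aadd :: "('k::field) skel \<Rightarrow> 'k skel \<Rightarrow> 'k skel" where
  "aadd f g = (\<lambda>a. f a + g a)"

definition ascale :: "'k::field \<Rightarrow> 'k skel \<Rightarrow> 'k skel" where
  "ascale c f = (\<lambda>a. c * f a)"

definition mon :: "(nat \<Rightarrow> nat) \<Rightarrow> ('k::field) skel" where
  "mon a = (\<lambda>b. if b = a then 1 else 0)"

definition X :: "nat \<Rightarrow> ('k::field) skel" where
  "X i = mon (\<lambda>j. if j = i then 1 else 0)"

definition Agr :: "nat \<Rightarrow> nat \<Rightarrow> ('k::field) skel set" where
  "Agr n d = {f \<in> Acar n. \<forall>a. f a \<noteq> 0 \<longrightarrow> mdeg n a = d}"

text \<open>Graded algebra automorphisms of A (as maps on the carrier; extended by the identity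
  outside the carrier so that equality of maps is equality of automorphisms).\<close>
definition graded_aut :: "nat \<Rightarrow> (('k::field) skel \<Rightarrow> 'k skel) \<Rightarrow> bool" where
  "graded_aut n g \<longleftrightarrow>
     bij_betw g (Acar n) (Acar n) \<and>
     (\<forall>f\<in>Acar n. \<forall>h\<in>Acar n. g (aadd f h) = aadd (g f) (g h)) \<and>
     (\<forall>c. \<forall>f\<in>Acar n. g (ascale c f) = ascale c (g f)) \<and>
     (\<forall>f\<in>Acar n. \<forall>h\<in>Acar n. g (amult n f h) = amult n (g f) (g h)) \<and>
     g (mon (\<lambda>_. 0)) = mon (\<lambda>_. 0) \<and>
     (\<forall>d. g ` Agr n d \<subseteq> Agr n d) \<and>
     (\<forall>f. f \<notin> Acar n \<longrightarrow> g f = f)"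

definition gtrace :: "nat \<Rightarrow> (('k::field) skel \<Rightarrow> 'k skel) \<Rightarrow> nat \<Rightarrow> 'k" where
  "gtrace n g d = (\<Sum>a\<in>{a\<in>expvecs n. mdeg n a = d}. g (mon a) a)"

definition quasi_reflection :: "nat \<Rightarrow> (('k::field) skel \<Rightarrow> 'k skel) \<Rightarrow> bool" where
  "quasi_reflection n g \<longleftrightarrow> graded_aut n g \<and>
     (\<exists>c. c \<noteq> 1 \<and> Abs_fps (gtrace n g) =
        inverse ((1 - fps_X) ^ (n - 1) * (1 - fps_const c * fps_X)))"

definition aut_subgroup :: "nat \<Rightarrow> (('k::field) skel \<Rightarrow> 'k skel) set \<Rightarrow> bool" where
  "aut_subgroup n G \<longleftrightarrow> (\<forall>g\<in>G. graded_aut n g) \<and> id \<in> G \<and>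
     (\<forall>g\<in>G. \<forall>h\<in>G. g \<circ> h \<in> G) \<and> (\<forall>g\<in>G. \<exists>h\<in>G. h \<circ> g = id \<and> g \<circ> h = id)"

inductive_set gen_group :: "nat \<Rightarrow> (('k::field) skel \<Rightarrow> 'k skel) set
    \<Rightarrow> (('k::field) skel \<Rightarrow> 'k skel) set" for n Q where
  gen_id: "id \<in> gen_group n Q"
| gen_base: "q \<in> Q \<Longrightarrow> q \<in> gen_group n Q"
| gen_comp: "g \<in> gen_group n Q \<Longrightarrow> h \<in> gen_group n Q \<Longrightarrow> g \<circ> h \<in> gen_group n Q"
| gen_inv: "g \<in> gen_group n Q \<Longrightarrow> graded_aut n h \<Longrightarrow> h \<circ> g = id \<Longrightarrow> h \<in> gen_group n Q"

text \<open>g equals theta_{s,lambda} / tau_{s,t,lambda} / s_{s,t,lambda}: a graded automorphism is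
  determined by its values on the generators x_1..x_n.\<close>
definition is_theta :: "nat \<Rightarrow> (('k::field) skel \<Rightarrow> 'k skel) \<Rightarrow> nat \<Rightarrow> 'k \<Rightarrow> bool" where
  "is_theta n g s l \<longleftrightarrow> g (X s) = ascale l (X s) \<and> (\<forall>i\<in>{1..n}. i \<noteq> s \<longrightarrow> g (X i) = X i)"

definition is_tau :: "nat \<Rightarrow> (('k::field) skel \<Rightarrow> 'k skel) \<Rightarrow> nat \<Rightarrow> nat \<Rightarrow> 'k \<Rightarrow> bool" where
  "is_tau n g s t l \<longleftrightarrow> g (X s) = ascale l (X t) \<and> g (X t) = ascale (- inverse l) (X s) \<and>
     (\<forall>i\<in>{1..n}. i \<noteq> s \<and> i \<noteq> t \<longrightarrow> g (X i) = X i)"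

definition is_s :: "nat \<Rightarrow> (('k::field) skel \<Rightarrow> 'k skel) \<Rightarrow> nat \<Rightarrow> nat \<Rightarrow> 'k \<Rightarrow> bool" where
  "is_s n g s t l \<longleftrightarrow> g (X s) = ascale l (X s) \<and> g (X t) = ascale (inverse l) (X t) \<and>
     (\<forall>i\<in>{1..n}. i \<noteq> s \<and> i \<noteq> t \<longrightarrow> g (X i) = X i)"

definition Theta_set :: "nat \<Rightarrow> (('k::field) skel \<Rightarrow> 'k skel) set \<Rightarrow> nat \<Rightarrow> 'k set" where
  "Theta_set n G i = {l. l \<noteq> 0 \<and> (\<exists>g\<in>G. is_theta n g i l)}"

definition T_set :: "nat \<Rightarrow> (('k::field) skel \<Rightarrow> 'k skel) set \<Rightarrow> nat \<Rightarrow> nat \<Rightarrow> 'k set" where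
  "T_set n G i j = {l. l \<noteq> 0 \<and> (\<exists>g\<in>G. is_tau n g i j l)}"

definition S_set :: "nat \<Rightarrow> (('k::field) skel \<Rightarrow> 'k skel) set \<Rightarrow> nat \<Rightarrow> nat \<Rightarrow> 'k set" where
  "S_set n G i j = {l. l \<noteq> 0 \<and> (\<exists>g\<in>G. is_s n g i j l)}"

definition is_circle :: "nat \<Rightarrow> (('k::field) skel \<Rightarrow> 'k skel) set \<Rightarrow> bool" where
  "is_circle n G \<longleftrightarrow> (\<forall>i\<in>{1..n}. \<forall>j\<in>{1..n}. i \<noteq> j \<longrightarrow>
     (i, j) \<in> {(a, b). a \<in> {1..n} \<and> b \<in> {1..n} \<and> a \<noteq> b \<and>
                        (\<exists>l. l \<noteq> 0 \<and> (\<exists>g\<in>G. is_tau n g a b l))}\<^sup>+)"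

definition cyclic_of_order :: "('k::field) set \<Rightarrow> nat \<Rightarrow> bool" where
  "cyclic_of_order H m \<longleftrightarrow> 0 < m \<and> finite H \<and> card H = m \<and>
     (\<exists>z. z \<noteq> 0 \<and> H = range (\<lambda>k::nat. z ^ k))"

definition alg_closed :: "'k::field itself \<Rightarrow> bool" where
  "alg_closed _ \<longleftrightarrow> (\<forall>p::'k poly. 0 < degree p \<longrightarrow> (\<exists>x. poly p x = 0))"

end

theory Submission
  imports Defs "HOL-Algebra.Multiplicative_Group"
begin


context group begin

lemma num_elems_of_ord_eq_phi_gen:
  assumes finite: "finite (carrier G)" and dvd: "d dvd Coset.order G"
      and roots: "\<And>d. 0 < d \<Longrightarrow> card {x \<in> carrier G. x [^] d = \<one>} \<le> d"
      and exists: "\<exists>a\<in>carrier G. ord a = d"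
  shows "card {a \<in> carrier G. ord a = d} = phi' d"
proof -
  from exists
  obtain a where a: "a \<in> carrier G" and ord_a: "ord a = d"
    by auto
  have "0 < Coset.order G" using finite unfolding Coset.order_def using one_closed by (auto simp add: card_gt_0_iff)
  then have dpos: "0 < d" using dvd by (simp add: dvd_pos_nat)
  have set_eq1: "{a[^]n| n. n \<in> {1 .. d}} = {x \<in> carrier G. x [^] d = \<one>}"
  proof (rule card_seteq)
    show "finite {x \<in> carrier G. x [^] d = \<one>}" using finite by auto
    show "{a[^]n| n. n \<in> {1 ..d}} \<subseteq> {x \<in> carrier G. x[^]d = \<one>}"
    proof
      fix x assume "x \<in> {a[^]n | n. n \<in> {1 .. d}}"
      then obtain n where n: "x = a[^]n \<and> n \<in> {1 .. d}" by auto
      have "x[^]d =(a[^]d)[^]n" using n a ord_a by (simp add:nat_pow_pow mult.commute)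
      hence "x[^]d = \<one>" using ord_a pow_ord_eq_1[OF a] by fastforce
      thus "x \<in> {x \<in> carrier G. x[^]d = \<one>}" using nat_pow_closed[OF a] n by blast
    qed
    show "card {x \<in> carrier G. x [^] d = \<one>} \<le> card {a[^]n | n. n \<in> {1 .. d}}"
    proof -
      have *: "{a[^]n | n. n \<in> {1 .. d }} = ((\<lambda> n. a[^]n) ` {1 .. d})" by auto
      have "card {x \<in> carrier G. x [^] d = \<one>} \<le> d" using roots dpos by blast
      thus ?thesis using ord_inj'[OF a] ord_a * by (simp add: card_image)
    qed
  qed
  have set_eq2: "{x \<in> carrier G . ord x = d}
                = (\<lambda> n . a[^]n) ` {n \<in> {1 .. d}. ord (a[^]n) = d}" (is "?L = ?R")
  proof
    have "x \<in> ?R" if x: "x \<in> (carrier G) \<and> ord x = d" for x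
    proof -
      from that have "x \<in> {x \<in> carrier G. x [^] d = \<one>}"
        by (simp add: pow_ord_eq_1[of x, symmetric])
      then obtain n where n: "x = a[^]n \<and> n \<in> {1 .. d}" using set_eq1 by blast
      then show ?thesis using x by fast
    qed
    thus "?L \<subseteq> ?R" by blast
    show "?R \<subseteq> ?L" using a by auto
  qed
  have "inj_on (\<lambda> n . a[^]n) {n \<in> {1 .. d}. ord (a[^]n) = d}"
    using ord_inj'[OF a, unfolded ord_a] unfolding inj_on_def by fast
  hence "card ((\<lambda>n. a[^]n) ` {n \<in> {1 .. d}. ord (a[^]n) = d})
         = card {k \<in> {1 .. d}. ord (a[^]k) = d}"
         using card_image by blast
  thus ?thesis using set_eq2 pow_ord_eq_ord_iff[OF finite \<open>a \<in> _\<close>, unfolded ord_a]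
    by (simp add: phi'_def)
qed

theorem group_has_gen_roots:
  assumes finite: "finite (carrier G)"
      and roots: "\<And>d. 0 < d \<Longrightarrow> card {x \<in> carrier G. x [^] d = \<one>} \<le> d"
  shows "\<exists> a \<in> carrier G . ord a = Coset.order G \<and> carrier G = {a[^]i | i::nat . i \<in> UNIV}"
proof -
  let ?N = "\<lambda> x . card {a \<in> carrier G. ord a  = x}"
  have *: "0 < Coset.order G" using finite unfolding Coset.order_def using one_closed by (auto simp add: card_gt_0_iff)
  have fin: "finite {d. d dvd Coset.order G }" using dvd_nat_bounds[OF *] by force
  have "(\<Sum>d | d dvd Coset.order G. ?N d)
      = card (UN d:{d . d dvd Coset.order G }. {a \<in> carrier G. ord a  = d})"
      (is "_ = card ?U")
    using fin finite by (subst card_UN_disjoint) auto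
  also have "?U = carrier G"
  proof
    have "x \<in> ?U" if x: "x \<in> carrier G" for x
    proof -
      from that have "ord x dvd Coset.order G"
        using ord_dvd_group_order by blast
      then show ?thesis
        using x by blast
    qed
    thus "carrier G \<subseteq> ?U" by blast
  qed auto
  also have "card ... = Coset.order G"
    by (simp add: Coset.order_def)
  finally have sum_Ns_eq: "(\<Sum>d | d dvd Coset.order G. ?N d) = Coset.order G" .
  have "card {a \<in> carrier G. ord a = d} \<le> phi' d"
    if d: "d dvd Coset.order G" for d
  proof (cases "card {a \<in> carrier G. ord a = d} = 0")
    case True
    thus ?thesis by presburger
  next
    case False
    hence "\<exists>a \<in> carrier G. ord a = d" by (auto simp: card_eq_0_iff)
    thus ?thesis using num_elems_of_ord_eq_phi_gen[OF finite d roots] by auto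
  qed
  hence all_le: "\<And>i. i \<in> {d. d dvd Coset.order G }
        \<Longrightarrow> (\<lambda>i. card {a \<in> carrier G. ord a = i}) i \<le> (\<lambda>i. phi' i) i" by fast
  hence le: "(\<Sum>i | i dvd Coset.order G. ?N i)
            \<le> (\<Sum>i | i dvd Coset.order G. phi' i)"
            using sum_mono[of "{d .  d dvd Coset.order G}"
                  "\<lambda>i. card {a \<in> carrier G. ord a = i}"] by presburger
  have "Coset.order G = (\<Sum>d | d dvd Coset.order G. phi' d)" using *
    by (simp add: sum_phi'_factors)
  hence eq: "(\<Sum>i | i dvd Coset.order G. ?N i)
          = (\<Sum>i | i dvd Coset.order G. phi' i)" using le sum_Ns_eq by presburger
  have "\<And>i. i \<in> {d. d dvd Coset.order G } \<Longrightarrow> ?N i = (\<lambda>i. phi' i) i"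
  proof (rule ccontr)
    fix i
    assume i1: "i \<in> {d. d dvd Coset.order G}" and "?N i \<noteq> phi' i"
    hence "?N i = 0"
      using num_elems_of_ord_eq_phi_gen[OF finite _ roots, of i] by (auto simp: card_eq_0_iff)
    moreover  have "0 < i" using * i1 by (simp add: dvd_nat_bounds[of "Coset.order G" i])
    ultimately have "?N i < phi' i" using phi'_nonzero by presburger
    hence "(\<Sum>i | i dvd Coset.order G. ?N i)
         < (\<Sum>i | i dvd Coset.order G. phi' i)"
      using sum_strict_mono_ex1[OF fin, of "?N" "\<lambda> i . phi' i"]
            i1 all_le by auto
    thus False using eq by force
  qed
  hence "?N (Coset.order G) > 0" using * by (simp add: phi'_nonzero)
  then obtain a where a: "a \<in> carrier G" and a_ord: "ord a = Coset.order G"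
    by (auto simp add: card_gt_0_iff)
  hence set_eq: "{a[^]i | i::nat. i \<in> UNIV} = (\<lambda>x. a[^]x) ` {0 .. ord a - 1}"
    using ord_elems[OF finite] by auto
  have card_eq: "card ((\<lambda>x. a[^]x) ` {0 .. ord a - 1}) = card {0 .. ord a - 1}"
    by (intro card_image ord_inj finite a)
  hence "card ((\<lambda> x . a[^]x) ` {0 .. ord a - 1}) = card {0 ..Coset.order G - 1}"
    using assms by (simp add: card_eq a_ord)
  hence card_R_minus_1: "card {a[^]i | i::nat. i \<in> UNIV} =  Coset.order G"
    using * by (subst set_eq) auto
  have **: "{a[^]i | i::nat. i \<in> UNIV} \<subseteq> carrier G"
    using nat_pow_closed[OF a] by auto
  with _ have "carrier G = {a[^]i|i::nat. i \<in> UNIV}"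
    by (rule card_seteq[symmetric]) (simp_all add: card_R_minus_1 finite Coset.order_def del: UNIV_I)
  thus ?thesis using a a_ord by blast
qed

end

lemma roots_unity_bound:
  fixes d :: nat assumes "0 < d"
  shows "card {x::'k::field. x ^ d = 1} \<le> d" "finite {x::'k::field. x ^ d = 1}"
proof -
  define p :: "'k poly" where "p = Polynomial.monom 1 d + [:-1:]"
  have dp: "degree p = d" unfolding p_def using assms
    by (subst degree_add_eq_left) (simp_all add: degree_monom_eq)
  have pnz: "p \<noteq> 0" using dp assms by auto
  have eq: "{x::'k. x ^ d = 1} = {x. poly p x = 0}" by (auto simp: p_def poly_monom)
  show "card {x::'k::field. x ^ d = 1} \<le> d" using card_poly_roots_bound[OF pnz] dp eq by simp
  show "finite {x::'k::field. x ^ d = 1}" using poly_roots_finite[OF pnz] eq by simp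
qed

lemma field_cyclic:
  fixes H :: "'k::field set"
  assumes fin: "finite H" and one: "1 \<in> H" and nz: "0 \<notin> H"
    and mc: "\<And>x y. x \<in> H \<Longrightarrow> y \<in> H \<Longrightarrow> x * y \<in> H"
  shows "\<exists>z\<in>H. H = range (\<lambda>k::nat. z ^ k) \<and> (\<forall>k. z ^ k = 1 \<longleftrightarrow> card H dvd k)"
    and "\<forall>x\<in>H. x ^ card H = 1"
proof -
  define Gr where "Gr = \<lparr>carrier = H, monoid.mult = (\<lambda>x y. x * y), one = (1::'k)\<rparr>"
  have powH: "x ^ k \<in> H" if "x \<in> H" for x k using that by (induct k) (auto simp: one mc)
  have invex: "\<exists>y\<in>H. y * x = 1" if x: "x \<in> H" for x
  proof -
    have "\<not> inj (\<lambda>k::nat. x ^ k)"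
    proof
      assume "inj (\<lambda>k::nat. x ^ k)"
      then have "infinite (range (\<lambda>k::nat. x ^ k))" by (simp add: finite_image_iff)
      moreover have "range (\<lambda>k::nat. x ^ k) \<subseteq> H" using powH x by auto
      ultimately show False using fin finite_subset by blast
    qed
    then obtain a b :: nat where ab: "a \<noteq> b" "x ^ a = x ^ b" unfolding inj_def by blast
    have "\<exists>a b::nat. a < b \<and> x ^ a = x ^ b"
      using ab by (metis linorder_neqE_nat)
    then obtain a b :: nat where ab: "a < b" "x ^ a = x ^ b" by blast
    have xnz: "x \<noteq> 0" using x nz by auto
    have "x ^ a * x ^ (b - a) = x ^ (a + (b - a))" by (simp add: power_add)
    also have "\<dots> = x ^ a * 1" using ab by simp
    finally have "x ^ a * x ^ (b - a) = x ^ a * 1" .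
    then have e: "x ^ (b - a) = 1" using xnz by simp
    have "x ^ (b - a - 1) * x = 1" using e ab by (metis Suc_diff_Suc diff_Suc_1 power_Suc2 zero_less_diff)
    then show ?thesis using powH[OF x] by blast
  qed
  interpret Gr: group Gr
    apply (rule groupI)
    using one mc invex by (auto simp: Gr_def)
  have pw: "x [^]\<^bsub>Gr\<^esub> k = x ^ k" for x and k :: nat
    by (induct k) (simp_all add: Gr_def mult.commute)
  have cG: "carrier Gr = H" by (simp add: Gr_def)
  have 1: "\<one>\<^bsub>Gr\<^esub> = 1" by (simp add: Gr_def)
  have oG: "Coset.order Gr = card H" by (simp add: Coset.order_def cG)
  have roots: "card {x \<in> carrier Gr. x [^]\<^bsub>Gr\<^esub> d = \<one>\<^bsub>Gr\<^esub>} \<le> d" if "0 < d" for d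
  proof -
    have "{x \<in> carrier Gr. x [^]\<^bsub>Gr\<^esub> d = \<one>\<^bsub>Gr\<^esub>} \<subseteq> {x::'k. x ^ d = 1}"
      by (auto simp: pw cG 1)
    then show ?thesis using roots_unity_bound[OF that] card_mono le_trans by blast
  qed
  obtain a where a: "a \<in> H" "Gr.ord a = card H" "H = {a [^]\<^bsub>Gr\<^esub> i | i::nat. i \<in> UNIV}"
    using Gr.group_has_gen_roots[of ] fin roots cG oG by auto
  show "\<exists>z\<in>H. H = range (\<lambda>k::nat. z ^ k) \<and> (\<forall>k. z ^ k = 1 \<longleftrightarrow> card H dvd k)"
  proof (intro bexI conjI allI)
    show "H = range (\<lambda>k::nat. a ^ k)" using a(3) by (auto simp: pw)
    fix k :: nat
    show "a ^ k = 1 \<longleftrightarrow> card H dvd k"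
      using Gr.pow_eq_id[of a k] a by (simp add: pw cG 1)
  qed (rule a(1))
  show "\<forall>x\<in>H. x ^ card H = 1"
    using Gr.pow_order_eq_1 by (simp add: pw cG oG 1)
qed



definition ev1 :: "nat \<Rightarrow> nat \<Rightarrow> nat" where "ev1 i = (\<lambda>j. if j = i then 1 else 0)"

lemma X_Acar: "i \<in> {1..n} \<Longrightarrow> (X i :: 'k::field skel) \<in> Acar n"
proof -
  assume i: "i \<in> {1..n}"
  have "{a. (X i :: 'k skel) a \<noteq> 0} = {ev1 i}" by (auto simp: Defs.X_def Defs.mon_def ev1_def)
  moreover have "ev1 i \<in> expvecs n" using i by (auto simp: ev1_def expvecs_def)
  ultimately show ?thesis unfolding Acar_def by (auto simp: Defs.X_def Defs.mon_def ev1_def)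
qed

lemma ascale_Acar: "f \<in> Acar n \<Longrightarrow> ascale c f \<in> Acar n"
  unfolding Acar_def ascale_def
  by (auto elim: finite_subset[rotated])

lemma ascale_ascale[simp]: "ascale c (ascale d f) = ascale (c * d) f"
  by (simp add: ascale_def mult.assoc)

lemma ascale_1[simp]: "ascale 1 f = f"
  by (simp add: ascale_def)

lemma X_val: "ascale l (X i) (ev1 i) = (l::'k::field)"
  by (simp add: ascale_def Defs.X_def Defs.mon_def ev1_def)

lemma aut_scale: "graded_aut n g \<Longrightarrow> f \<in> Acar n \<Longrightarrow> g (ascale c f) = ascale c (g f)"
  unfolding graded_aut_def by blast

definition mv :: "(('k::field) skel \<Rightarrow> 'k skel) \<Rightarrow> nat \<Rightarrow> 'k \<Rightarrow> nat \<Rightarrow> bool" where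
  "mv g a c b \<longleftrightarrow> g (X a) = ascale c (X b)"

lemma mv_id: "mv id a 1 a" by (simp add: mv_def)

lemma mv_comp:
  assumes "graded_aut n h" "b \<in> {1..n}" "mv g a c b" "mv h b d e" "r = d * c"
  shows "mv (h \<circ> g) a r e"
  using assms aut_scale[OF assms(1) X_Acar[OF assms(2)]] by (simp add: mv_def mult.commute)

lemma mv_inv:
  assumes "graded_aut n h" "h \<circ> g = id" "b \<in> {1..n}" "mv g a c b" "c \<noteq> 0"
  shows "mv h b (inverse c) a"
proof -
  have "X a = h (g (X a))" using assms(2) by (metis comp_apply id_apply)
  also have "\<dots> = ascale c (h (X b))" using assms(4) aut_scale[OF assms(1) X_Acar[OF assms(3)]]
    by (simp add: mv_def)
  finally have "ascale (inverse c) (X a) = ascale (inverse c * c) (h (X b))" by simp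
  then show ?thesis using assms(5) by (simp add: mv_def)
qed

lemma mv_inj: "mv g a l b \<Longrightarrow> mv g a m b \<Longrightarrow> l = m"
  by (metis X_val mv_def)

lemma is_theta_mv: "is_theta n g s l \<longleftrightarrow> mv g s l s \<and> (\<forall>i\<in>{1..n}. i \<noteq> s \<longrightarrow> mv g i 1 i)"
  by (simp add: is_theta_def mv_def)
lemma is_tau_mv: "is_tau n g s t l \<longleftrightarrow> mv g s l t \<and> mv g t (- inverse l) s \<and>
     (\<forall>i\<in>{1..n}. i \<noteq> s \<and> i \<noteq> t \<longrightarrow> mv g i 1 i)"
  by (simp add: is_tau_def mv_def)
lemma is_s_mv: "is_s n g s t l \<longleftrightarrow> mv g s l s \<and> mv g t (inverse l) t \<and>
     (\<forall>i\<in>{1..n}. i \<noteq> s \<and> i \<noteq> t \<longrightarrow> mv g i 1 i)"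
  by (simp add: is_s_def mv_def)

lemma fin_mv: "finite G \<Longrightarrow> finite {l. \<exists>g\<in>G. mv g a l b}"
proof -
  assume f: "finite G"
  have "{l. \<exists>g\<in>G. mv g a l b} \<subseteq> (\<lambda>g. g (X a) (ev1 b)) ` G"
  proof
    fix l assume "l \<in> {l. \<exists>g\<in>G. mv g a l b}"
    then obtain g where "g \<in> G" "g (X a) = ascale l (X b)" by (auto simp: mv_def)
    moreover then have "l = g (X a) (ev1 b)" using X_val[of l b] by simp
    ultimately show "l \<in> (\<lambda>g. g (X a) (ev1 b)) ` G" by (rule_tac image_eqI) auto
  qed
  then show ?thesis using f finite_subset by blast
qed

lemma Theta_intro:
  assumes "l \<noteq> 0" "g \<in> G" "mv g i l i" "\<And>k. k \<in> {1..n} \<Longrightarrow> k \<noteq> i \<Longrightarrow> mv g k 1 k"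
  shows "l \<in> Theta_set n G i"
proof -
  have "is_theta n g i l" unfolding is_theta_mv using assms by simp
  then show ?thesis unfolding Theta_set_def using assms(1,2) by (simp add: bexI)
qed

lemma Theta_elim:
  assumes "l \<in> Theta_set n G i"
  obtains g where "l \<noteq> 0" "g \<in> G" "mv g i l i" "\<And>k. k \<in> {1..n} \<Longrightarrow> k \<noteq> i \<Longrightarrow> mv g k 1 k"
  using assms unfolding Theta_set_def is_theta_mv by auto

lemma S_intro:
  assumes "l \<noteq> 0" "g \<in> G" "mv g i l i" "mv g j (inverse l) j"
    "\<And>k. k \<in> {1..n} \<Longrightarrow> k \<noteq> i \<Longrightarrow> k \<noteq> j \<Longrightarrow> mv g k 1 k"
  shows "l \<in> S_set n G i j"
proof -
  have "is_s n g i j l" unfolding is_s_mv using assms by simp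
  then show ?thesis unfolding S_set_def using assms(1,2) by (simp add: bexI)
qed

lemma S_elim:
  assumes "l \<in> S_set n G i j"
  obtains g where "l \<noteq> 0" "g \<in> G" "mv g i l i" "mv g j (inverse l) j"
    "\<And>k. k \<in> {1..n} \<Longrightarrow> k \<noteq> i \<Longrightarrow> k \<noteq> j \<Longrightarrow> mv g k 1 k"
  using assms unfolding S_set_def is_s_mv by auto

lemma T_intro:
  assumes "l \<noteq> 0" "g \<in> G" "mv g i l j" "mv g j (- inverse l) i"
    "\<And>k. k \<in> {1..n} \<Longrightarrow> k \<noteq> i \<Longrightarrow> k \<noteq> j \<Longrightarrow> mv g k 1 k"
  shows "l \<in> T_set n G i j"
proof -
  have "is_tau n g i j l" unfolding is_tau_mv using assms by simp
  then show ?thesis unfolding T_set_def using assms(1,2) by (simp add: bexI)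
qed

lemma T_elim:
  assumes "l \<in> T_set n G i j"
  obtains g where "l \<noteq> 0" "g \<in> G" "mv g i l j" "mv g j (- inverse l) i"
    "\<And>k. k \<in> {1..n} \<Longrightarrow> k \<noteq> i \<Longrightarrow> k \<noteq> j \<Longrightarrow> mv g k 1 k"
  using assms unfolding T_set_def is_tau_mv by auto

lemma mv3:
  assumes "graded_aut n g" "graded_aut n t" "b \<in> {1..n}" "c \<in> {1..n}"
    "mv h a x b" "mv g b y c" "mv t c z d" "r = z * y * x"
  shows "mv (t \<circ> g \<circ> h) a r d"
proof -
  have "mv (g \<circ> h) a (y * x) c" by (rule mv_comp[OF assms(1,3,5,6)]) simp
  then have "mv (t \<circ> (g \<circ> h)) a r d" by (rule mv_comp[OF assms(2,4) _ assms(7)]) (simp add: assms(8) mult.assoc)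
  then show ?thesis by (simp add: comp_assoc)
qed

locale AG =
  fixes n :: nat and G :: "(('k::field) skel \<Rightarrow> 'k skel) set"
  assumes sub: "aut_subgroup n G"
begin

lemma G_aut: "g \<in> G \<Longrightarrow> graded_aut n g" using sub by (simp add: aut_subgroup_def)
lemma G_id: "id \<in> G" using sub by (simp add: aut_subgroup_def)
lemma G_comp: "g \<in> G \<Longrightarrow> h \<in> G \<Longrightarrow> h \<circ> g \<in> G" using sub by (simp add: aut_subgroup_def)
lemma G_inv: "g \<in> G \<Longrightarrow> \<exists>h\<in>G. h \<circ> g = id" using sub unfolding aut_subgroup_def by blast

lemma Theta_one: "1 \<in> Theta_set n G i"
  unfolding Theta_set_def is_theta_mv using G_id mv_id by auto

lemma Theta_mult:
  assumes i: "i \<in> {1..n}" and l: "l \<in> Theta_set n G i" and m: "m \<in> Theta_set n G i"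
  shows "l * m \<in> Theta_set n G i"
proof -
  obtain g where g: "l \<noteq> 0" "g \<in> G" "mv g i l i" "\<And>k. k \<in> {1..n} \<Longrightarrow> k \<noteq> i \<Longrightarrow> mv g k 1 k"
    by (rule Theta_elim[OF l]) blast
  obtain h where h: "m \<noteq> 0" "h \<in> G" "mv h i m i" "\<And>k. k \<in> {1..n} \<Longrightarrow> k \<noteq> i \<Longrightarrow> mv h k 1 k"
    by (rule Theta_elim[OF m]) blast
  note hc = mv_comp[OF G_aut[OF h(2)]]
  show ?thesis
  proof (rule Theta_intro)
    show "l * m \<noteq> 0" using g h by simp
    show "h \<circ> g \<in> G" by (rule G_comp[OF g(2) h(2)])
    show "mv (h \<circ> g) i (l * m) i" by (rule hc[OF i g(3) h(3)]) simp
    fix k assume k: "k \<in> {1..n}" "k \<noteq> i"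
    show "mv (h \<circ> g) k 1 k" by (rule hc[OF k(1) g(4)[OF k] h(4)[OF k]]) simp
  qed
qed

lemma Theta_inv:
  assumes i: "i \<in> {1..n}" and l: "l \<in> Theta_set n G i"
  shows "inverse l \<in> Theta_set n G i"
proof -
  obtain g where g: "l \<noteq> 0" "g \<in> G" "mv g i l i" "\<And>k. k \<in> {1..n} \<Longrightarrow> k \<noteq> i \<Longrightarrow> mv g k 1 k"
    by (rule Theta_elim[OF l]) blast
  obtain h where h: "h \<in> G" "h \<circ> g = id" using G_inv g(2) by blast
  note hi = mv_inv[OF G_aut[OF h(1)] h(2)]
  show ?thesis
  proof (rule Theta_intro)
    show "inverse l \<noteq> 0" using g by simp
    show "h \<in> G" by fact
    show "mv h i (inverse l) i" by (rule hi[OF i g(3) g(1)])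
    fix k assume k: "k \<in> {1..n}" "k \<noteq> i"
    show "mv h k 1 k" using hi[OF k(1) g(4)[OF k]] by simp
  qed
qed

lemma Theta_fin: "finite G \<Longrightarrow> finite (Theta_set n G i)"
proof -
  assume f: "finite G"
  have "Theta_set n G i \<subseteq> {l. \<exists>g\<in>G. mv g i l i}"
  proof
    fix l assume "l \<in> Theta_set n G i"
    then obtain g where "g \<in> G" "mv g i l i" by (rule Theta_elim)
    then show "l \<in> {l. \<exists>g\<in>G. mv g i l i}" by blast
  qed
  then show ?thesis using fin_mv[OF f] finite_subset by blast
qed

lemma S_one: "1 \<in> S_set n G i j"
  by (rule S_intro[OF _ G_id]) (simp_all add: mv_id)

lemma S_mult:
  assumes i: "i \<in> {1..n}" and j: "j \<in> {1..n}" and l: "l \<in> S_set n G i j" and m: "m \<in> S_set n G i j"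
  shows "l * m \<in> S_set n G i j"
proof -
  obtain g where g: "l \<noteq> 0" "g \<in> G" "mv g i l i" "mv g j (inverse l) j"
      "\<And>k. k \<in> {1..n} \<Longrightarrow> k \<noteq> i \<Longrightarrow> k \<noteq> j \<Longrightarrow> mv g k 1 k"
    by (rule S_elim[OF l]) blast
  obtain h where h: "m \<noteq> 0" "h \<in> G" "mv h i m i" "mv h j (inverse m) j"
      "\<And>k. k \<in> {1..n} \<Longrightarrow> k \<noteq> i \<Longrightarrow> k \<noteq> j \<Longrightarrow> mv h k 1 k"
    by (rule S_elim[OF m]) blast
  note hc = mv_comp[OF G_aut[OF h(2)]]
  show ?thesis
  proof (rule S_intro)
    show "l * m \<noteq> 0" using g h by simp
    show "h \<circ> g \<in> G" by (rule G_comp[OF g(2) h(2)])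
    show "mv (h \<circ> g) i (l * m) i" by (rule hc[OF i g(3) h(3)]) simp
    show "mv (h \<circ> g) j (inverse (l * m)) j" by (rule hc[OF j g(4) h(4)]) (simp add: mult.commute)
    fix k assume k: "k \<in> {1..n}" "k \<noteq> i" "k \<noteq> j"
    show "mv (h \<circ> g) k 1 k" by (rule hc[OF k(1) g(5)[OF k] h(5)[OF k]]) simp
  qed
qed

lemma S_inv:
  assumes i: "i \<in> {1..n}" and j: "j \<in> {1..n}" and l: "l \<in> S_set n G i j"
  shows "inverse l \<in> S_set n G i j"
proof -
  obtain g where g: "l \<noteq> 0" "g \<in> G" "mv g i l i" "mv g j (inverse l) j"
      "\<And>k. k \<in> {1..n} \<Longrightarrow> k \<noteq> i \<Longrightarrow> k \<noteq> j \<Longrightarrow> mv g k 1 k"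
    by (rule S_elim[OF l]) blast
  obtain h where h: "h \<in> G" "h \<circ> g = id" using G_inv g(2) by blast
  note hi = mv_inv[OF G_aut[OF h(1)] h(2)]
  show ?thesis
  proof (rule S_intro)
    show "inverse l \<noteq> 0" using g by simp
    show "h \<in> G" by fact
    show "mv h i (inverse l) i" by (rule hi[OF i g(3) g(1)])
    show "mv h j (inverse (inverse l)) j" by (rule hi[OF j g(4)]) (use g(1) in simp)
    fix k assume k: "k \<in> {1..n}" "k \<noteq> i" "k \<noteq> j"
    show "mv h k 1 k" using hi[OF k(1) g(5)[OF k]] by simp
  qed
qed

lemma S_swap:
  assumes l: "l \<in> S_set n G i j"
  shows "inverse l \<in> S_set n G j i"
proof -
  obtain g where g: "l \<noteq> 0" "g \<in> G" "mv g i l i" "mv g j (inverse l) j"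
      "\<And>k. k \<in> {1..n} \<Longrightarrow> k \<noteq> i \<Longrightarrow> k \<noteq> j \<Longrightarrow> mv g k 1 k"
    by (rule S_elim[OF l]) blast
  show ?thesis
    by (rule S_intro[OF _ g(2) g(4)]) (use g in auto)
qed

lemma S_fin: "finite G \<Longrightarrow> finite (S_set n G i j)"
proof -
  assume f: "finite G"
  have "S_set n G i j \<subseteq> {l. \<exists>g\<in>G. mv g i l i}"
  proof
    fix l assume "l \<in> S_set n G i j"
    then obtain g where "g \<in> G" "mv g i l i" by (rule S_elim)
    then show "l \<in> {l. \<exists>g\<in>G. mv g i l i}" by blast
  qed
  then show ?thesis using fin_mv[OF f] finite_subset by blast
qed

lemma S_nz: "0 \<notin> S_set n G i j" by (simp add: S_set_def)

lemma tau1_elim: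
  assumes "1 \<in> T_set n G i j"
  obtains t where "t \<in> G" "mv t i 1 j" "mv t j (-1) i"
      "\<And>k. k \<in> {1..n} \<Longrightarrow> k \<noteq> i \<Longrightarrow> k \<noteq> j \<Longrightarrow> mv t k 1 k"
proof -
  obtain t where "t \<in> G" "mv t i 1 j" "mv t j (- inverse 1) i"
      "\<And>k. k \<in> {1..n} \<Longrightarrow> k \<noteq> i \<Longrightarrow> k \<noteq> j \<Longrightarrow> mv t k 1 k"
    by (rule T_elim[OF assms]) blast
  then show ?thesis using that by simp
qed

lemma tau1_inv:
  assumes i: "i \<in> {1..n}" and j: "j \<in> {1..n}" and T: "1 \<in> T_set n G i j"
  obtains t h where "t \<in> G" "mv t i 1 j" "mv t j (-1) i"
      "\<And>k. k \<in> {1..n} \<Longrightarrow> k \<noteq> i \<Longrightarrow> k \<noteq> j \<Longrightarrow> mv t k 1 k"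
      "h \<in> G" "mv h j 1 i" "mv h i (-1) j"
      "\<And>k. k \<in> {1..n} \<Longrightarrow> k \<noteq> i \<Longrightarrow> k \<noteq> j \<Longrightarrow> mv h k 1 k"
proof -
  obtain t where t: "t \<in> G" "mv t i 1 j" "mv t j (-1) i"
      "\<And>k. k \<in> {1..n} \<Longrightarrow> k \<noteq> i \<Longrightarrow> k \<noteq> j \<Longrightarrow> mv t k 1 k"
    by (rule tau1_elim[OF T]) blast
  obtain h where h: "h \<in> G" "h \<circ> t = id" using G_inv t(1) by blast
  note hi = mv_inv[OF G_aut[OF h(1)] h(2)]
  have "mv h j 1 i" using hi[OF j t(2)] by simp
  moreover have "mv h i (-1) j" using hi[OF i t(3)] by simp
  moreover have "\<And>k. k \<in> {1..n} \<Longrightarrow> k \<noteq> i \<Longrightarrow> k \<noteq> j \<Longrightarrow> mv h k 1 k"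
    using hi t(4) by fastforce
  ultimately show ?thesis using that t h(1) by blast
qed

lemma Theta_conj:
  assumes i: "i \<in> {1..n}" and j: "j \<in> {1..n}" and ij: "i \<noteq> j"
    and T: "1 \<in> T_set n G i j" and l: "l \<in> Theta_set n G i"
  shows "l \<in> Theta_set n G j"
proof -
  obtain t h where t: "t \<in> G" "mv t i 1 j" "mv t j (-1) i"
      "\<And>k. k \<in> {1..n} \<Longrightarrow> k \<noteq> i \<Longrightarrow> k \<noteq> j \<Longrightarrow> mv t k 1 k"
      and h: "h \<in> G" "mv h j 1 i" "mv h i (-1) j"
      "\<And>k. k \<in> {1..n} \<Longrightarrow> k \<noteq> i \<Longrightarrow> k \<noteq> j \<Longrightarrow> mv h k 1 k"
    by (rule tau1_inv[OF i j T]) blast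
  obtain g where g: "l \<noteq> 0" "g \<in> G" "mv g i l i" "\<And>k. k \<in> {1..n} \<Longrightarrow> k \<noteq> i \<Longrightarrow> mv g k 1 k"
    by (rule Theta_elim[OF l]) blast
  note m3 = mv3[OF G_aut[OF g(2)] G_aut[OF t(1)]]
  show ?thesis
  proof (rule Theta_intro)
    show "l \<noteq> 0" by fact
    show "t \<circ> g \<circ> h \<in> G" by (intro G_comp t g h)
    show "mv (t \<circ> g \<circ> h) j l j" by (rule m3[OF i i h(2) g(3) t(2)]) simp
    fix k assume k: "k \<in> {1..n}" "k \<noteq> j"
    show "mv (t \<circ> g \<circ> h) k 1 k"
    proof (cases "k = i")
      case True
      then show ?thesis using m3[OF j j h(3) g(4)[OF j] t(3)] ij by simp
    next
      case False
      then show ?thesis using m3[OF k(1) k(1) h(4)[OF k(1) False k(2)] g(4)[OF k(1) False] t(4)[OF k(1) False k(2)]] by simp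
    qed
  qed
qed

lemma S_conj:
  assumes i: "i \<in> {1..n}" and j: "j \<in> {1..n}" and k: "k \<in> {1..n}"
    and ij: "i \<noteq> j" and ik: "i \<noteq> k" and jk: "j \<noteq> k"
    and T: "1 \<in> T_set n G j k" and l: "l \<in> S_set n G i j"
  shows "l \<in> S_set n G i k"
proof -
  obtain t h where t: "t \<in> G" "mv t j 1 k" "mv t k (-1) j"
      "\<And>m. m \<in> {1..n} \<Longrightarrow> m \<noteq> j \<Longrightarrow> m \<noteq> k \<Longrightarrow> mv t m 1 m"
      and h: "h \<in> G" "mv h k 1 j" "mv h j (-1) k"
      "\<And>m. m \<in> {1..n} \<Longrightarrow> m \<noteq> j \<Longrightarrow> m \<noteq> k \<Longrightarrow> mv h m 1 m"
    by (rule tau1_inv[OF j k T]) blast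
  obtain g where g: "l \<noteq> 0" "g \<in> G" "mv g i l i" "mv g j (inverse l) j"
      "\<And>m. m \<in> {1..n} \<Longrightarrow> m \<noteq> i \<Longrightarrow> m \<noteq> j \<Longrightarrow> mv g m 1 m"
    by (rule S_elim[OF l]) blast
  note m3 = mv3[OF G_aut[OF g(2)] G_aut[OF t(1)]]
  show ?thesis
  proof (rule S_intro)
    show "l \<noteq> 0" by fact
    show "t \<circ> g \<circ> h \<in> G" by (intro G_comp t g h)
    show "mv (t \<circ> g \<circ> h) i l i"
      by (rule m3[OF i i h(4)[OF i ij ik] g(3) t(4)[OF i ij ik]]) simp
    show "mv (t \<circ> g \<circ> h) k (inverse l) k"
      by (rule m3[OF j j h(2) g(4) t(2)]) simp
    fix m assume m: "m \<in> {1..n}" "m \<noteq> i" "m \<noteq> k"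
    show "mv (t \<circ> g \<circ> h) m 1 m"
    proof (cases "m = j")
      case True
      then show ?thesis using m3[OF k k h(3) g(5)[OF k ik[symmetric] jk[symmetric]] t(3)] by simp
    next
      case False
      then show ?thesis using m3[OF m(1) m(1) h(4)[OF m(1) False m(3)] g(5)[OF m(1) m(2) False] t(4)[OF m(1) False m(3)]] by simp
    qed
  qed
qed

lemma T_sub_S:
  assumes i: "i \<in> {1..n}" and j: "j \<in> {1..n}" and ij: "i \<noteq> j"
    and T: "1 \<in> T_set n G i j" and l: "l \<in> T_set n G i j"
  shows "l \<in> S_set n G i j"
proof -
  obtain t h where t: "t \<in> G" "mv t i 1 j" "mv t j (-1) i"
      "\<And>k. k \<in> {1..n} \<Longrightarrow> k \<noteq> i \<Longrightarrow> k \<noteq> j \<Longrightarrow> mv t k 1 k"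
      and h: "h \<in> G" "mv h j 1 i" "mv h i (-1) j"
      "\<And>k. k \<in> {1..n} \<Longrightarrow> k \<noteq> i \<Longrightarrow> k \<noteq> j \<Longrightarrow> mv h k 1 k"
    by (rule tau1_inv[OF i j T]) blast
  obtain g where g: "l \<noteq> 0" "g \<in> G" "mv g i l j" "mv g j (- inverse l) i"
      "\<And>k. k \<in> {1..n} \<Longrightarrow> k \<noteq> i \<Longrightarrow> k \<noteq> j \<Longrightarrow> mv g k 1 k"
    by (rule T_elim[OF l]) blast
  note hc = mv_comp[OF G_aut[OF g(2)]]
  have "l \<in> S_set n G j i"
  proof (rule S_intro)
    show "l \<noteq> 0" by fact
    show "g \<circ> h \<in> G" by (intro G_comp g h)
    show "mv (g \<circ> h) j l j" by (rule hc[OF i h(2) g(3)]) simp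
    show "mv (g \<circ> h) i (inverse l) i" by (rule hc[OF j h(3) g(4)]) simp
    fix k assume k: "k \<in> {1..n}" "k \<noteq> j" "k \<noteq> i"
    show "mv (g \<circ> h) k 1 k" by (rule hc[OF k(1) h(4)[OF k(1,3,2)] g(5)[OF k(1,3,2)]]) simp
  qed
  then have "inverse l \<in> S_set n G i j" using S_swap by fastforce
  then show ?thesis using S_inv[OF i j] by fastforce
qed

lemma S_sub_T:
  assumes i: "i \<in> {1..n}" and j: "j \<in> {1..n}" and ij: "i \<noteq> j"
    and T: "1 \<in> T_set n G i j" and l: "l \<in> S_set n G i j"
  shows "l \<in> T_set n G i j"
proof -
  obtain t where t: "t \<in> G" "mv t i 1 j" "mv t j (-1) i"
      "\<And>k. k \<in> {1..n} \<Longrightarrow> k \<noteq> i \<Longrightarrow> k \<noteq> j \<Longrightarrow> mv t k 1 k"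
    by (rule tau1_elim[OF T]) blast
  have "inverse (inverse l) \<in> S_set n G j i" by (rule S_swap[OF S_inv[OF i j l]])
  then have l': "l \<in> S_set n G j i" by simp
  obtain g where g: "l \<noteq> 0" "g \<in> G" "mv g j l j" "mv g i (inverse l) i"
      "\<And>k. k \<in> {1..n} \<Longrightarrow> k \<noteq> j \<Longrightarrow> k \<noteq> i \<Longrightarrow> mv g k 1 k"
    by (rule S_elim[OF l']) blast
  note hc = mv_comp[OF G_aut[OF g(2)]]
  show ?thesis
  proof (rule T_intro)
    show "l \<noteq> 0" by fact
    show "g \<circ> t \<in> G" by (intro G_comp g t)
    show "mv (g \<circ> t) i l j" by (rule hc[OF j t(2) g(3)]) simp
    show "mv (g \<circ> t) j (- inverse l) i" by (rule hc[OF i t(3) g(4)]) simp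
    fix k assume k: "k \<in> {1..n}" "k \<noteq> i" "k \<noteq> j"
    show "mv (g \<circ> t) k 1 k" by (rule hc[OF k(1) t(4)[OF k] g(5)[OF k(1,3,2)]]) simp
  qed
qed

lemma Theta_sub_S:
  assumes i: "i \<in> {1..n}" and j: "j \<in> {1..n}" and ij: "i \<noteq> j"
    and l: "l \<in> Theta_set n G i" and l': "inverse l \<in> Theta_set n G j"
  shows "l \<in> S_set n G i j"
proof -
  obtain g where g: "l \<noteq> 0" "g \<in> G" "mv g i l i" "\<And>k. k \<in> {1..n} \<Longrightarrow> k \<noteq> i \<Longrightarrow> mv g k 1 k"
    by (rule Theta_elim[OF l]) blast
  obtain h where h: "inverse l \<noteq> 0" "h \<in> G" "mv h j (inverse l) j" "\<And>k. k \<in> {1..n} \<Longrightarrow> k \<noteq> j \<Longrightarrow> mv h k 1 k"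
    by (rule Theta_elim[OF l']) blast
  note hc = mv_comp[OF G_aut[OF h(2)]]
  show ?thesis
  proof (rule S_intro)
    show "l \<noteq> 0" by fact
    show "h \<circ> g \<in> G" by (intro G_comp g h)
    show "mv (h \<circ> g) i l i" by (rule hc[OF i g(3) h(4)[OF i ij]]) simp
    show "mv (h \<circ> g) j (inverse l) j" by (rule hc[OF j g(4)[OF j ij[symmetric]] h(3)]) simp
    fix k assume k: "k \<in> {1..n}" "k \<noteq> i" "k \<noteq> j"
    show "mv (h \<circ> g) k 1 k" by (rule hc[OF k(1) g(4)[OF k(1,2)] h(4)[OF k(1,3)]]) simp
  qed
qed

lemma minus1_S:
  assumes i: "i \<in> {1..n}" and j: "j \<in> {1..n}" and ij: "i \<noteq> j"
    and T: "1 \<in> T_set n G i j"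
  shows "-1 \<in> S_set n G i j"
proof -
  obtain t where t: "t \<in> G" "mv t i 1 j" "mv t j (-1) i"
      "\<And>k. k \<in> {1..n} \<Longrightarrow> k \<noteq> i \<Longrightarrow> k \<noteq> j \<Longrightarrow> mv t k 1 k"
    by (rule tau1_elim[OF T]) blast
  note hc = mv_comp[OF G_aut[OF t(1)]]
  show ?thesis
  proof (rule S_intro)
    show "(-1::'k) \<noteq> 0" by simp
    show "t \<circ> t \<in> G" by (intro G_comp t)
    show "mv (t \<circ> t) i (-1) i" by (rule hc[OF j t(2) t(3)]) simp
    show "mv (t \<circ> t) j (inverse (-1)) j" by (rule hc[OF i t(3) t(2)]) simp
    fix k assume k: "k \<in> {1..n}" "k \<noteq> i" "k \<noteq> j"
    show "mv (t \<circ> t) k 1 k" by (rule hc[OF k(1) t(4)[OF k] t(4)[OF k]]) simp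
  qed
qed

lemma Theta_nz: "0 \<notin> Theta_set n G i" by (simp add: Theta_set_def)

end


theorem lemma4p2:
  fixes n :: nat and G :: "(('k::field_char_0) skel \<Rightarrow> 'k skel) set"
  assumes "alg_closed TYPE('k)"
    and "2 \<le> n"
    and "aut_subgroup n G" and "finite G"
    and "G = gen_group n {g\<in>G. quasi_reflection n g}"
    and "is_circle n G"
    and "\<forall>i\<in>{1..n}. \<forall>j\<in>{1..n}. i \<noteq> j \<longrightarrow> (\<exists>g\<in>G. is_tau n g i j 1)"
  shows "(\<forall>i\<in>{1..n}. \<forall>j\<in>{1..n}. Theta_set n G i = Theta_set n G j)
    \<and> (\<forall>i\<in>{1..n}. \<forall>j\<in>{1..n}. \<forall>i'\<in>{1..n}. \<forall>j'\<in>{1..n}. i \<noteq> j \<longrightarrow> i' \<noteq> j' \<longrightarrow>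
          S_set n G i j = S_set n G i' j' \<and> T_set n G i j = T_set n G i' j'
          \<and> T_set n G i j = S_set n G i j)
    \<and> (\<exists>\<alpha> \<beta>. (\<forall>i\<in>{1..n}. cyclic_of_order (Theta_set n G i) \<alpha>)
          \<and> (\<forall>i\<in>{1..n}. \<forall>j\<in>{1..n}. i \<noteq> j \<longrightarrow> cyclic_of_order (S_set n G i j) \<beta>)
          \<and> even \<beta> \<and> \<alpha> dvd \<beta>)"
proof -
  interpret AG n G by unfold_locales (rule assms(3))
  have T1: "1 \<in> T_set n G i j" if "i \<in> {1..n}" "j \<in> {1..n}" "i \<noteq> j" for i j
    using assms(7) that unfolding T_set_def by auto
  have ThEq: "Theta_set n G i = Theta_set n G j" if i: "i \<in> {1..n}" and j: "j \<in> {1..n}" for i j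
  proof (cases "i = j")
    case False
    show ?thesis
      using Theta_conj[OF i j False T1[OF i j False]] Theta_conj[OF j i _ T1[OF j i]] False by blast
  qed simp
  have Sswap: "S_set n G i j \<subseteq> S_set n G j i" if i: "i \<in> {1..n}" and j: "j \<in> {1..n}" for i j
  proof
    fix l assume "l \<in> S_set n G i j"
    then have "inverse (inverse l) \<in> S_set n G j i" by (rule S_swap[OF S_inv[OF i j]])
    then show "l \<in> S_set n G j i" unfolding inverse_inverse_eq .
  qed
  have Sstep: "S_set n G i j \<subseteq> S_set n G i k"
    if i: "i \<in> {1..n}" and j: "j \<in> {1..n}" and k: "k \<in> {1..n}" and ij: "i \<noteq> j" and ik: "i \<noteq> k" for i j k
  proof (cases "j = k")
    case False
    show ?thesis
    proof
      fix l assume "l \<in> S_set n G i j"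
      then show "l \<in> S_set n G i k" by (rule S_conj[OF i j k ij ik False T1[OF j k False]])
    qed
  next
    case True
    show ?thesis unfolding True by (rule subset_refl)
  qed
  have Ssub: "S_set n G i j \<subseteq> S_set n G i' j'"
    if i: "i \<in> {1..n}" and j: "j \<in> {1..n}" and i': "i' \<in> {1..n}" and j': "j' \<in> {1..n}"
      and ij: "i \<noteq> j" and ij': "i' \<noteq> j'" for i j i' j'
  proof (cases "i' = i")
    case True
    then show ?thesis using Sstep[OF i j j' ij] ij' by simp
  next
    case False
    have "S_set n G i j \<subseteq> S_set n G i i'" using Sstep[OF i j i' ij] False by simp
    also have "\<dots> \<subseteq> S_set n G i' i" by (rule Sswap[OF i i'])
    also have "\<dots> \<subseteq> S_set n G i' j'" using Sstep[OF i' i j' _ ij'] False by simp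
    finally show ?thesis .
  qed
  have SEq: "S_set n G i j = S_set n G i' j'"
    if "i \<in> {1..n}" "j \<in> {1..n}" "i' \<in> {1..n}" "j' \<in> {1..n}" "i \<noteq> j" "i' \<noteq> j'" for i j i' j'
    using Ssub[OF that] Ssub[OF that(3,4,1,2,6,5)] by blast
  have TS: "T_set n G i j = S_set n G i j"
    if i: "i \<in> {1..n}" and j: "j \<in> {1..n}" and ij: "i \<noteq> j" for i j
    using T_sub_S[OF i j ij T1[OF i j ij]] S_sub_T[OF i j ij T1[OF i j ij]] by blast
  have one: "(1::nat) \<in> {1..n}" and two: "(2::nat) \<in> {1..n}" using assms(2) by auto
  define \<alpha> where "\<alpha> = card (Theta_set n G 1)"
  define \<beta> where "\<beta> = card (S_set n G 1 2)"
  have cycTh: "\<exists>z\<in>Theta_set n G 1. Theta_set n G 1 = range (\<lambda>k::nat. z ^ k) \<and> (\<forall>k. z ^ k = 1 \<longleftrightarrow> \<alpha> dvd k)"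
    unfolding \<alpha>_def
    by (rule field_cyclic(1)[OF Theta_fin[OF assms(4)] Theta_one Theta_nz Theta_mult[OF one]])
  have cycS: "\<exists>z\<in>S_set n G 1 2. S_set n G 1 2 = range (\<lambda>k::nat. z ^ k) \<and> (\<forall>k. z ^ k = 1 \<longleftrightarrow> \<beta> dvd k)"
    unfolding \<beta>_def
    by (rule field_cyclic(1)[OF S_fin[OF assms(4)] S_one S_nz S_mult[OF one two]])
  have powS: "\<forall>x\<in>S_set n G 1 2. x ^ \<beta> = 1"
    unfolding \<beta>_def
    by (rule field_cyclic(2)[OF S_fin[OF assms(4)] S_one S_nz S_mult[OF one two]])
  have cTh: "cyclic_of_order (Theta_set n G 1) \<alpha>"
  proof -
    obtain z where z: "z \<in> Theta_set n G 1" "Theta_set n G 1 = range (\<lambda>k::nat. z ^ k)" using cycTh by blast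
    have "0 < \<alpha>" unfolding \<alpha>_def using Theta_fin[OF assms(4)] Theta_one card_gt_0_iff by blast
    moreover have "z \<noteq> 0" using z(1) Theta_nz by auto
    ultimately show ?thesis unfolding cyclic_of_order_def using z Theta_fin[OF assms(4)] \<alpha>_def by blast
  qed
  have cS: "cyclic_of_order (S_set n G 1 2) \<beta>"
  proof -
    obtain z where z: "z \<in> S_set n G 1 2" "S_set n G 1 2 = range (\<lambda>k::nat. z ^ k)" using cycS by blast
    have "0 < \<beta>" unfolding \<beta>_def using S_fin[OF assms(4)] S_one card_gt_0_iff by blast
    moreover have "z \<noteq> 0" using z(1) S_nz by auto
    ultimately show ?thesis unfolding cyclic_of_order_def using z S_fin[OF assms(4)] \<beta>_def by blast
  qed
  have ev: "even \<beta>"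
  proof (rule ccontr)
    assume "odd \<beta>"
    then have "(-1::'k) ^ \<beta> = -1" by simp
    moreover have "(-1::'k) ^ \<beta> = 1" using powS minus1_S[OF one two _ T1[OF one two]] by simp
    ultimately show False by simp
  qed
  have dv: "\<alpha> dvd \<beta>"
  proof -
    obtain z where z: "z \<in> Theta_set n G 1" "\<forall>k. z ^ k = 1 \<longleftrightarrow> \<alpha> dvd k" using cycTh by blast
    have "inverse z \<in> Theta_set n G 2" using Theta_inv[OF one z(1)] ThEq[OF one two] by simp
    then have "z \<in> S_set n G 1 2" using Theta_sub_S[OF one two _ z(1)] by simp
    then have "z ^ \<beta> = 1" using powS by blast
    then show ?thesis using z(2) by blast
  qed
  have P1: "\<forall>i\<in>{1..n}. \<forall>j\<in>{1..n}. Theta_set n G i = Theta_set n G j"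
    using ThEq by blast
  have P2: "\<forall>i\<in>{1..n}. \<forall>j\<in>{1..n}. \<forall>i'\<in>{1..n}. \<forall>j'\<in>{1..n}. i \<noteq> j \<longrightarrow> i' \<noteq> j' \<longrightarrow>
          S_set n G i j = S_set n G i' j' \<and> T_set n G i j = T_set n G i' j'
          \<and> T_set n G i j = S_set n G i j"
  proof (intro ballI impI conjI)
    fix i j i' j' assume a: "i \<in> {1..n}" "j \<in> {1..n}" "i' \<in> {1..n}" "j' \<in> {1..n}" "i \<noteq> j" "i' \<noteq> j'"
    show "S_set n G i j = S_set n G i' j'" by (rule SEq[OF a])
    show "T_set n G i j = T_set n G i' j'" using TS[OF a(1,2,5)] SEq[OF a] TS[OF a(3,4,6), symmetric] by (rule trans[OF trans])
    show "T_set n G i j = S_set n G i j" by (rule TS[OF a(1,2,5)])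
  qed
  have P3: "\<forall>i\<in>{1..n}. cyclic_of_order (Theta_set n G i) \<alpha>"
  proof
    fix i assume i: "i \<in> {1..n}"
    show "cyclic_of_order (Theta_set n G i) \<alpha>" unfolding ThEq[OF i one] by (rule cTh)
  qed
  have n12: "(1::nat) \<noteq> 2" by simp
  have P4: "\<forall>i\<in>{1..n}. \<forall>j\<in>{1..n}. i \<noteq> j \<longrightarrow> cyclic_of_order (S_set n G i j) \<beta>"
  proof (intro ballI impI)
    fix i j assume ij: "i \<in> {1..n}" "j \<in> {1..n}" "i \<noteq> j"
    show "cyclic_of_order (S_set n G i j) \<beta>" unfolding SEq[OF ij(1,2) one two ij(3) n12] by (rule cS)
  qed
  show ?thesis using P1 P2 P3 P4 ev dv by blast
qed

end
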